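(* Let $0<\theta<1$, let $\rho,\tau$ be positive integers with $\rho\le\tau$, and let $m$ be a positive integer with $m\neq 2^\beta$ for every integer $\beta\ge0$. Put $T=2^{\lceil\lg m\rceil}-m-1$. Then $$L_m^{\rho/\tau}(\theta)=\int_{-\infty}^{\infty}\ell_m^{\rho/\tau}(\varepsilon)\,f_\theta(\varepsilon)\,d\varepsilon = 1+\lfloor\lg m\rfloor+\frac{1}{2}\,\frac{\theta^{(T+1)/2}}{1-\theta^{m/2}}\left(\theta^{\frac{\rho}{2\tau}}+\theta^{-\frac{\rho}{2\tau}}\right).$$
   Context: $\lg$ denotes $\log_2$. The Laplace density with parameter $\theta\in(0,1)$ is $f_\theta(\varepsilon)=-\frac{\ln\theta}{2}\theta^{|\varepsilon|}$, $\varepsilon\in\mathbb{R}$. The generalized Rice mapping $M:\mathbb{R}\to\mathbb{Z}_{\ge0}$ is $M(\varepsilon)=\lfloor 2\varepsilon\rfloor$ if $\varepsilon\ge 0$ and $M(\varepsilon)=-\lfloor 2\varepsilon\rfloor-1$ if $\varepsilon<0$. For a positive integer $m$, the Golomb codeword of a non-negative integer $N$ consists of $j=\lfloor N/m\rfloor$ in unary ($j+1$ bits) followed by $k=N \bmod m$ in minimal binary, which uses $\lfloor\lg m\rfloor$ bits if $k<2^{\lceil\lg m\rceil}-m$ and $\lceil\lg m\rceil$ bits otherwise; let $\lambda_m(N)$ be the total number of bits. The (finest-precision) code length of a real residual $\varepsilon$ is $\ell_m(\varepsilon)=\lambda_m(M(\varepsilon))$. For positive integers $\rho\le\tau$ (precision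 $\rho/\tau$), the code length assigned to the real residual $\varepsilon$ at precision $\rho/\tau$ is modeled as the finest-precision assignment shifted left by $\rho/(2\tau)$: $\ell_m^{\rho/\tau}(\varepsilon)=\ell_m(\varepsilon+\rho/(2\tau))$. $L_m^{\rho/\tau}(\theta)$ denotes the average code length under the Laplace density, as in the claim. *)

theory Defs
  imports "HOL-Analysis.Analysis"
begin

definition lg :: "real \<Rightarrow> real" where
  "lg x = log 2 x"

definition laplace_density :: "real \<Rightarrow> real \<Rightarrow> real" where
  "laplace_density \<theta> e = - (ln \<theta>) / 2 * \<theta> powr \<bar>e\<bar>"

definition rice_map :: "real \<Rightarrow> nat" where
  "rice_map e = (if e \<ge> 0 then nat \<lfloor>2 * e\<rfloor> else nat (- \<lfloor>2 * e\<rfloor> - 1))"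

text \<open>Length in bits of the Golomb codeword of N with parameter m:
  unary part (N div m + 1 bits) plus minimal binary code of N mod m.\<close>
definition golomb_len :: "nat \<Rightarrow> nat \<Rightarrow> nat" where
  "golomb_len m N =
     (N div m + 1) +
     (if N mod m < 2 ^ nat \<lceil>lg (real m)\<rceil> - m
      then nat \<lfloor>lg (real m)\<rfloor> else nat \<lceil>lg (real m)\<rceil>)"

definition code_len :: "nat \<Rightarrow> real \<Rightarrow> real" where
  "code_len m e = real (golomb_len m (rice_map e))"

definition code_len_prec :: "nat \<Rightarrow> nat \<Rightarrow> nat \<Rightarrow> real \<Rightarrow> real" where
  "code_len_prec m \<rho> \<tau> e = code_len m (e + real \<rho> / (2 * real \<tau>))"

definition avg_code_len :: "nat \<Rightarrow> nat \<Rightarrow> nat \<Rightarrow> real \<Rightarrow> real" where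
  "avg_code_len m \<rho> \<tau> \<theta> =
     integral UNIV (\<lambda>e. code_len_prec m \<rho> \<tau> e * laplace_density \<theta> e)"

end

theory Submission imports Defs begin

lemma dens_nonneg: "0 < \<theta> \<Longrightarrow> \<theta> < 1 \<Longrightarrow> 0 \<le> laplace_density \<theta> x"
  unfolding laplace_density_def by (simp add: ln_less_zero_iff divide_nonpos_pos mult_nonpos_nonneg)

lemma dens_meas[measurable]: "laplace_density \<theta> \<in> borel_measurable borel"
  unfolding laplace_density_def by measurable

lemma half_has_integral:
  assumes "0 < \<theta>" "\<theta> < 1" "0 \<le> b"
  shows "(laplace_density \<theta> has_integral \<theta> powr b / 2) {b..}"
proof -
  define k where "k = - ln \<theta>"
  have k: "k > 0" using assms by (simp add: k_def)
  have "((\<lambda>x. k/2 * exp (-k*x)) has_integral k/2 * (exp (-k*b)/k)) {b..}"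
    by (intro has_integral_mult_right has_integral_exp_minus_to_infinity k)
  moreover have "k/2 * (exp (-k*b)/k) = \<theta> powr b / 2"
    using k assms by (simp add: k_def powr_def)
  ultimately have "((\<lambda>x. k/2 * exp (-k*x)) has_integral \<theta> powr b / 2) {b..}" by (simp only:)
  then show ?thesis
    apply (rule has_integral_eq[rotated])
    using assms by (simp add: laplace_density_def k_def powr_def)
qed

lemma half_has_integral_open:
  assumes "0 < \<theta>" "\<theta> < 1" "0 \<le> b"
  shows "(laplace_density \<theta> has_integral \<theta> powr b / 2) {b<..}"
proof -
  have "(laplace_density \<theta> has_integral \<theta> powr b / 2) {b<..} \<longleftrightarrow>
        (laplace_density \<theta> has_integral \<theta> powr b / 2) {b..}"
    by (rule has_integral_spike_set_eq) (auto intro: negligible_subset[of "{b}"])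
  then show ?thesis using half_has_integral[OF assms] by simp
qed

lemma nn_half:
  assumes "0 < \<theta>" "\<theta> < 1" "0 \<le> b"
  shows "(\<integral>\<^sup>+x. ennreal (indicator {b..} x * laplace_density \<theta> x) \<partial>lborel) = ennreal (\<theta> powr b / 2)"
  using nn_integral_has_integral_lebesgue[OF dens_nonneg half_has_integral[OF assms]] assms by simp

lemma nn_half_open:
  assumes "0 < \<theta>" "\<theta> < 1" "0 \<le> b"
  shows "(\<integral>\<^sup>+x. ennreal (indicator {b<..} x * laplace_density \<theta> x) \<partial>lborel) = ennreal (\<theta> powr b / 2)"
  using nn_integral_has_integral_lebesgue[OF dens_nonneg half_has_integral_open[OF assms]] assms by simp

lemma nn_half_neg:
  assumes "0 < \<theta>" "\<theta> < 1" "0 \<le> b"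
  shows "(\<integral>\<^sup>+x. ennreal (indicator {..<-b} x * laplace_density \<theta> x) \<partial>lborel) = ennreal (\<theta> powr b / 2)"
proof -
  have "(\<integral>\<^sup>+x. ennreal (indicator {..<-b} x * laplace_density \<theta> x) \<partial>lborel)
     = (\<integral>\<^sup>+x. ennreal (indicator {..<-b} (- x) * laplace_density \<theta> (- x)) \<partial>lborel)"
    using nn_integral_real_affine[of "\<lambda>x. ennreal (indicator {..<-b} x * laplace_density \<theta> x)" "-1" 0] by simp
  also have "\<dots> = (\<integral>\<^sup>+x. ennreal (indicator {b<..} x * laplace_density \<theta> x) \<partial>lborel)"
    by (intro nn_integral_cong) (auto simp: laplace_density_def indicator_def)
  finally show ?thesis using nn_half_open[OF assms] by simp
qed


lemma rice_meas[measurable]: "rice_map \<in> measurable borel (count_space UNIV)"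
  unfolding rice_map_def by measurable

lemma g_meas: "(\<lambda>x. code_len_prec m \<rho> \<tau> x * laplace_density \<theta> x) \<in> borel_measurable borel"
  unfolding code_len_prec_def code_len_def by measurable

lemma rice_ge:
  assumes "1 \<le> n"
  shows "(n \<le> rice_map y) \<longleftrightarrow> (real n/2 \<le> y \<or> y < - real n/2)"
proof (cases "y \<ge> 0")
  case True
  have "(n \<le> rice_map y) \<longleftrightarrow> int n \<le> \<lfloor>2*y\<rfloor>" using True assms unfolding rice_map_def by auto
  also have "\<dots> \<longleftrightarrow> real n \<le> 2*y" by (simp add: le_floor_iff)
  finally show ?thesis using True by auto
next
  case False
  have "(n \<le> rice_map y) \<longleftrightarrow> \<lfloor>2*y\<rfloor> < - int n" using False assms unfolding rice_map_def by auto
  also have "\<dots> \<longleftrightarrow> 2*y < - real n" by (simp add: floor_less_iff)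
  finally show ?thesis using False assms by auto
qed

lemma count_set:
  fixes a m N :: nat
  assumes "1 \<le> a" "a \<le> m"
  shows "{i. a + i*m \<le> N} = {..< N div m + (if a \<le> N mod m then 1 else 0)}"
proof -
  have m: "m > 0" using assms by simp
  define j where "j = N div m"
  define k where "k = N mod m"
  have N: "N = j*m + k" "k < m" using m by (simp_all add: j_def k_def)
  have "a + i*m \<le> N \<longleftrightarrow> i < j + (if a \<le> k then 1 else 0)" for i
  proof (cases "i < j")
    case True
    then have "i + 1 \<le> j" by simp
    then have "(i+1)*m \<le> j*m" by (rule mult_right_mono) simp
    then show ?thesis using True N assms by (auto simp: algebra_simps)
  next
    case False
    show ?thesis
    proof (cases "i = j")
      case True then show ?thesis using N by auto
    next
      case False2: False
      then have "j + 1 \<le> i" using False by simp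
      then have "(j+1)*m \<le> i*m" by (rule mult_right_mono) simp
      then show ?thesis using False False2 N assms by (auto simp: algebra_simps)
    qed
  qed
  then show ?thesis by (auto simp: j_def k_def)
qed

lemma golomb_eq:
  fixes m F a :: nat
  assumes "nat \<lfloor>lg (real m)\<rfloor> = F" "nat \<lceil>lg (real m)\<rceil> = F + 1" "a = 2^(F+1) - m" "1 \<le> a" "a \<le> m"
  shows "golomb_len m N = 1 + F + card {i. a + i*m \<le> N}"
  using assms unfolding golomb_len_def count_set[OF assms(4,5)] by auto


lemma log_facts:
  fixes m :: nat
  assumes "0 < m" "\<forall>\<beta>::nat. m \<noteq> 2 ^ \<beta>"
  obtains F :: nat where "\<lfloor>lg (real m)\<rfloor> = int F" "\<lceil>lg (real m)\<rceil> = int F + 1"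
    "2^F < m" "m < 2^(F+1)"
proof -
  define z where "z = \<lfloor>lg (real m)\<rfloor>"
  have l0: "lg (real m) \<ge> 0" using assms by (simp add: lg_def)
  then have z0: "z \<ge> 0" by (simp add: z_def)
  define F where "F = nat z"
  have zF: "z = int F" using z0 by (simp add: F_def)
  have ni: "lg (real m) \<noteq> real_of_int z"
  proof
    assume h: "lg (real m) = real_of_int z"
    have "real m = 2 powr (log 2 (real m))" using assms by simp
    also have "\<dots> = 2 powr (real F)" using h zF unfolding lg_def by simp
    finally have "real m = 2 powr (real F)" .
    then have "real m = 2 ^ F" by (simp add: powr_realpow)
    then have "m = 2^F" by (metis of_nat_eq_iff of_nat_numeral of_nat_power)
    then show False using assms by blast
  qed
  have c: "\<lceil>lg (real m)\<rceil> = z + 1"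
    using ni unfolding z_def by (metis ceiling_altdef)
  have "real_of_int z \<le> lg (real m)" "lg (real m) < real_of_int z + 1"
    unfolding z_def by linarith+
  then have a1: "real F \<le> log 2 (real m)" "log 2 (real m) < real F + 1"
    using zF by (simp_all add: lg_def)
  have "2 powr real F \<le> real m" using a1(1) assms by (simp add: le_log_iff)
  then have "2 ^ F \<le> m" by (simp add: powr_realpow)
  moreover have "m \<noteq> 2^F" using assms by blast
  ultimately have "2^F < m" by simp
  have "real m < 2 powr (real F + 1)" using a1(2) assms by (simp add: log_less_iff)
  moreover have "(2::real) powr (real F + 1) = 2 ^ (F+1)"
    using powr_realpow[of 2 "F+1"] by (simp add: add.commute)
  ultimately have "real m < 2 ^ (F+1)" by simp
  then have "m < 2^(F+1)" by (metis of_nat_less_iff of_nat_numeral of_nat_power)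
  show ?thesis
    using that[of F] zF c \<open>2^F < m\<close> \<open>m < 2^(F+1)\<close> unfolding z_def by simp
qed


theorem theorem2:
  fixes \<theta> :: real and m \<rho> \<tau> :: nat
  assumes "0 < \<theta>" and "\<theta> < 1"
    and "0 < \<rho>" and "\<rho> \<le> \<tau>"
    and "0 < m" and "\<forall>\<beta>::nat. m \<noteq> 2 ^ \<beta>"
  shows "let T = (2::real) ^ nat \<lceil>lg (real m)\<rceil> - real m - 1 in
    avg_code_len m \<rho> \<tau> \<theta> =
      1 + real_of_int \<lfloor>lg (real m)\<rfloor>
      + 1/2 * (\<theta> powr ((T + 1) / 2) / (1 - \<theta> powr (real m / 2)))
          * (\<theta> powr (real \<rho> / (2 * real \<tau>)) + \<theta> powr (- (real \<rho> / (2 * real \<tau>))))"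
proof -
  obtain F :: nat where Ff: "\<lfloor>lg (real m)\<rfloor> = int F" "\<lceil>lg (real m)\<rceil> = int F + 1"
    "2^F < m" "m < 2^(F+1)"
    using log_facts[OF assms(5,6)] by blast
  define a :: nat where "a = 2^(F+1) - m"
  have a1: "1 \<le> a" "a \<le> m" using Ff by (auto simp: a_def)
  have ra: "real a = 2^(F+1) - real m" using Ff unfolding a_def
    by (metis less_imp_le of_nat_diff of_nat_numeral of_nat_power)
  define s where "s = real \<rho> / (2 * real \<tau>)"
  have s: "0 < s" "s \<le> 1/2" using assms by (auto simp: s_def field_simps)
  define d where "d = laplace_density \<theta>"
  have d0: "0 \<le> d x" for x using dens_nonneg assms by (simp add: d_def)
  define n where "n i = a + i*m" for i
  define lo where "lo i = real (n i)/2 - s" for i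
  define hi where "hi i = real (n i)/2 + s" for i
  have n1: "1 \<le> n i" for i using a1 by (simp add: n_def)
  have lo0: "0 \<le> lo i" for i using n1[of i] s by (simp add: lo_def)
  have hi0: "0 \<le> hi i" for i using n1[of i] s by (simp add: hi_def)
  define h where "h i x = ennreal (indicator {lo i..} x * d x) + ennreal (indicator {..< - hi i} x * d x)" for i x
  have gl: "golomb_len m N = 1 + F + card {i. n i \<le> N}" for N
    unfolding n_def by (rule golomb_eq[OF _ _ a_def a1]) (use Ff in simp_all)
  have pw: "ennreal (code_len_prec m \<rho> \<tau> x * d x) = ennreal ((1+F) * d x) + (\<Sum>i. h i x)" for x
  proof -
    define N where "N = rice_map (x + s)"
    define K where "K = N div m + (if a \<le> N mod m then 1 else 0)"
    have cs: "{i. n i \<le> N} = {..<K}" unfolding n_def K_def by (rule count_set[OF a1])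
    have hi: "h i x = (if i < K then ennreal (d x) else 0)" for i
    proof -
      have "i < K \<longleftrightarrow> n i \<le> N" using cs by blast
      also have "\<dots> \<longleftrightarrow> (real (n i)/2 \<le> x + s \<or> x + s < - real (n i)/2)"
        unfolding N_def by (rule rice_ge[OF n1])
      finally have e: "i < K \<longleftrightarrow> (lo i \<le> x \<or> x < - hi i)" by (auto simp: lo_def hi_def)
      have "- hi i < lo i" using n1[of i] by (simp add: lo_def hi_def)
      then show ?thesis unfolding h_def using e by (auto simp: indicator_def)
    qed
    have "(\<Sum>i. h i x) = (\<Sum>i<K. h i x)"
      by (rule suminf_finite) (auto simp: hi)
    also have "\<dots> = of_nat K * ennreal (d x)" by (simp add: hi)
    finally have su: "(\<Sum>i. h i x) = of_nat K * ennreal (d x)" .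
    have "code_len_prec m \<rho> \<tau> x = real (1 + F + K)"
      unfolding code_len_prec_def code_len_def gl cs s_def[symmetric] N_def[symmetric] by simp
    then have "code_len_prec m \<rho> \<tau> x * d x = (1+F) * d x + K * d x"
      by (simp add: algebra_simps)
    moreover have "ennreal ((1+F) * d x + K * d x) = ennreal ((1+F) * d x) + ennreal (K * d x)"
      using d0[of x] by (intro ennreal_plus) auto
    moreover have "ennreal (K * d x) = of_nat K * ennreal (d x)"
      using d0[of x] by (simp add: ennreal_mult ennreal_of_nat_eq_real_of_nat)
    ultimately show ?thesis using su by simp
  qed
  have dm[measurable]: "d \<in> borel_measurable borel" unfolding d_def by measurable
  have hm[measurable]: "h i \<in> borel_measurable borel" for i unfolding h_def by measurable
  have Ih: "(\<integral>\<^sup>+x. h i x \<partial>lborel) = ennreal (\<theta> powr lo i / 2 + \<theta> powr hi i / 2)" for i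
  proof -
    have "(\<integral>\<^sup>+x. h i x \<partial>lborel) = (\<integral>\<^sup>+x. ennreal (indicator {lo i..} x * d x) \<partial>lborel)
       + (\<integral>\<^sup>+x. ennreal (indicator {..< - hi i} x * d x) \<partial>lborel)"
      unfolding h_def by (rule nn_integral_add) measurable
    also have "\<dots> = ennreal (\<theta> powr lo i / 2) + ennreal (\<theta> powr hi i / 2)"
      unfolding d_def using nn_half[OF assms(1,2) lo0] nn_half_neg[OF assms(1,2) hi0] by simp
    finally show ?thesis by (simp add: ennreal_plus)
  qed
  have Id: "(\<integral>\<^sup>+x. ennreal (d x) \<partial>lborel) = 1"
  proof -
    have "(\<integral>\<^sup>+x. ennreal (d x) \<partial>lborel) = (\<integral>\<^sup>+x. ennreal (indicator {0..} x * d x) + ennreal (indicator {..< - 0} x * d x) \<partial>lborel)"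
      by (intro nn_integral_cong) (auto simp: indicator_def)
    also have "\<dots> = (\<integral>\<^sup>+x. ennreal (indicator {0..} x * d x) \<partial>lborel)
       + (\<integral>\<^sup>+x. ennreal (indicator {..< - 0} x * d x) \<partial>lborel)"
      by (rule nn_integral_add) measurable
    also have "\<dots> = ennreal (\<theta> powr 0 / 2) + ennreal (\<theta> powr 0 / 2)"
      unfolding d_def using nn_half[OF assms(1,2), of 0] nn_half_neg[OF assms(1,2), of 0] by simp
    also have "\<dots> = ennreal (\<theta> powr 0 / 2 + \<theta> powr 0 / 2)"
      by (rule ennreal_plus[symmetric]) auto
    finally show ?thesis using assms by simp
  qed
  define q where "q = \<theta> powr (real m / 2)"
  have q: "0 < q" "q < 1" unfolding q_def using assms powr_less_mono'[OF assms(1,2), of 0 "real m/2"] by auto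
  define C where "C = \<theta> powr (real a / 2) * (\<theta> powr (-s) + \<theta> powr s) / 2"
  have ci: "\<theta> powr lo i / 2 + \<theta> powr hi i / 2 = C * q^i" for i
  proof -
    have qi: "q^i = \<theta> powr (real i * (real m/2))"
      unfolding q_def using assms by (simp add: powr_realpow[symmetric] powr_powr mult.commute)
    have "\<theta> powr lo i = \<theta> powr (real a/2) * \<theta> powr (-s) * q^i"
      unfolding qi lo_def n_def by (simp add: powr_add[symmetric] algebra_simps add_divide_distrib)
    moreover have "\<theta> powr hi i = \<theta> powr (real a/2) * \<theta> powr s * q^i"
      unfolding qi hi_def n_def by (simp add: powr_add[symmetric] algebra_simps add_divide_distrib)
    ultimately show ?thesis unfolding C_def by (simp add: algebra_simps)
  qed
  have C0: "0 \<le> C" unfolding C_def by simp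
  have sums: "(\<lambda>i. C * q^i) sums (C / (1 - q))"
    using sums_mult[OF geometric_sums[of q], of C] q by simp
  have Isum: "(\<Sum>i. ennreal (\<theta> powr lo i / 2 + \<theta> powr hi i / 2)) = ennreal (C / (1 - q))"
    unfolding ci by (rule suminf_ennreal_eq[OF _ sums]) (use C0 q in simp)
  define R where "R = (1 + real F) + C / (1 - q)"
  have "(\<integral>\<^sup>+x. ennreal (code_len_prec m \<rho> \<tau> x * d x) \<partial>lborel)
      = (\<integral>\<^sup>+x. ennreal ((1+F) * d x) + (\<Sum>i. h i x) \<partial>lborel)"
    by (simp add: pw)
  also have "\<dots> = (\<integral>\<^sup>+x. ennreal ((1+F) * d x) \<partial>lborel) + (\<integral>\<^sup>+x. (\<Sum>i. h i x) \<partial>lborel)"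
    by (rule nn_integral_add) measurable
  also have "(\<integral>\<^sup>+x. (\<Sum>i. h i x) \<partial>lborel) = (\<Sum>i. \<integral>\<^sup>+x. h i x \<partial>lborel)"
    by (rule nn_integral_suminf) measurable
  also have "(\<integral>\<^sup>+x. ennreal ((1+F) * d x) \<partial>lborel) = ennreal (1+F) * (\<integral>\<^sup>+x. ennreal (d x) \<partial>lborel)"
    using d0 by (simp add: ennreal_mult nn_integral_cmult)
  finally have "(\<integral>\<^sup>+x. ennreal (code_len_prec m \<rho> \<tau> x * d x) \<partial>lborel) = ennreal R"
    unfolding Id Ih Isum R_def using C0 q by (simp add: ennreal_plus)
  then have "((\<lambda>x. code_len_prec m \<rho> \<tau> x * d x) has_integral R) UNIV"
    by (intro nn_integral_has_integral)
       (use g_meas d0 C0 q in \<open>auto simp: d_def R_def code_len_prec_def code_len_def\<close>)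
  then have "avg_code_len m \<rho> \<tau> \<theta> = R"
    unfolding avg_code_len_def d_def by (rule integral_unique)
  moreover have hc: "nat \<lceil>lg (real m)\<rceil> = F + 1" using Ff(2) by simp
  ultimately show ?thesis
    unfolding Let_def R_def C_def q_def s_def hc using Ff(1) ra
    by (simp add: algebra_simps)
qed
end
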